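(* Let $R$ be either $3A_1\oplus A_2\oplus A_4$ or $4A_1\oplus A_5$. Then $R$ admits an isometric embedding into neither $I_{1,9}=\langle1\rangle\oplus 9\langle-1\rangle$ nor $II_{1,9}=H\oplus E_8$. In particular, there is no rational homology projective plane $S$ with only cyclic quotient singularities, $K_S$ nef and exactly $5$ singular points, whose minimal resolution $f:S'\to S$ has exceptional lattice $R$ isomorphic to $3A_1\oplus A_2\oplus A_4$ or to $4A_1\oplus A_5$.
   Context: $A_n$, $E_8$ denote the negative definite root lattices; $H$ is the even unimodular lattice of signature $(1,1)$; $\langle k\rangle$ is the rank one lattice with generator of square $k$. A rational homology projective plane is a normal projective complex surface with the same Betti numbers as $\mathbb{CP}^2$. The exceptional lattice $R$ is the sublattice of $H^2(S',\mathbb{Z})/\mathrm{torsion}$ (cup product) spanned by the classes of all irreducible exceptional curves of $f$. *)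

theory Defs
  imports Main
begin

text \<open>A lattice is represented by its rank n and its Gram matrix with respect to a
  Z-basis e_0,...,e_(n-1): the lattice is Z^n with bilinear form (x,y) |-> x^T G y.
  Entries of G outside {0..<n} x {0..<n} are irrelevant (conventionally 0).\<close>

type_synonym lat = "nat \<times> (nat \<Rightarrow> nat \<Rightarrow> int)"

definition lat_rank :: "lat \<Rightarrow> nat" where "lat_rank L = fst L"
definition lat_gram :: "lat \<Rightarrow> nat \<Rightarrow> nat \<Rightarrow> int" where "lat_gram L = snd L"

definition lat_form :: "lat \<Rightarrow> (nat \<Rightarrow> int) \<Rightarrow> (nat \<Rightarrow> int) \<Rightarrow> int" where
  "lat_form L x y = (\<Sum>k<lat_rank L. \<Sum>l<lat_rank L. x k * lat_gram L k l * y l)"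

definition lat_sum :: "lat \<Rightarrow> lat \<Rightarrow> lat" where
  "lat_sum L M = (lat_rank L + lat_rank M,
     (\<lambda>i j. if i < lat_rank L \<and> j < lat_rank L then lat_gram L i j
            else if lat_rank L \<le> i \<and> lat_rank L \<le> j
                    \<and> i < lat_rank L + lat_rank M \<and> j < lat_rank L + lat_rank M
                 then lat_gram M (i - lat_rank L) (j - lat_rank L)
            else 0))"

definition zero_lat :: lat where "zero_lat = (0, \<lambda>_ _. 0)"

definition lat_sums :: "lat list \<Rightarrow> lat" where
  "lat_sums Ls = foldr lat_sum Ls zero_lat"

definition rank1_lat :: "int \<Rightarrow> lat" where
  "rank1_lat k = (1, \<lambda>i j. if i = 0 \<and> j = 0 then k else 0)"

definition A_lat :: "nat \<Rightarrow> lat" where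
  "A_lat n = (n, \<lambda>i j. if i < n \<and> j < n then
                         (if i = j then -2 else if i + 1 = j \<or> j + 1 = i then 1 else 0)
                       else 0)"

text \<open>Negative definite E_8 (Bourbaki labelling 1..8 shifted to 0..7:
  edges 1-3, 3-4, 4-5, 5-6, 6-7, 7-8, 2-4).\<close>
definition E8_edge :: "nat \<Rightarrow> nat \<Rightarrow> bool" where
  "E8_edge i j = ((i, j) \<in> {(0,2),(2,3),(3,4),(4,5),(5,6),(6,7),(1,3)})"

definition E8_lat :: lat where
  "E8_lat = (8, \<lambda>i j. if i < 8 \<and> j < 8 then
                        (if i = j then -2 else if E8_edge i j \<or> E8_edge j i then 1 else 0)
                      else 0)"

definition H_lat :: lat where
  "H_lat = (2, \<lambda>i j. if i < 2 \<and> j < 2 \<and> i \<noteq> j then 1 else 0)"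

definition I_1_9 :: lat where
  "I_1_9 = lat_sums (rank1_lat 1 # replicate 9 (rank1_lat (-1)))"

definition II_1_9 :: lat where
  "II_1_9 = lat_sum H_lat E8_lat"

text \<open>An isometric embedding L -> M: an injective Z-linear map Z^n -> Z^m, given by the
  images v i (coordinate vectors in Z^m) of the basis vectors, preserving the forms.\<close>
definition lat_embeds :: "lat \<Rightarrow> lat \<Rightarrow> bool" where
  "lat_embeds L M \<longleftrightarrow> (\<exists>v :: nat \<Rightarrow> nat \<Rightarrow> int.
     (\<forall>i<lat_rank L. \<forall>j<lat_rank L. lat_form M (v i) (v j) = lat_gram L i j) \<and>
     (\<forall>c :: nat \<Rightarrow> int. (\<forall>k<lat_rank M. (\<Sum>i<lat_rank L. c i * v i k) = 0)
                         \<longrightarrow> (\<forall>i<lat_rank L. c i = 0)))"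

definition R1 :: lat where
  "R1 = lat_sums [A_lat 1, A_lat 1, A_lat 1, A_lat 2, A_lat 4]"

definition R2 :: lat where
  "R2 = lat_sums [A_lat 1, A_lat 1, A_lat 1, A_lat 1, A_lat 5]"

end

theory Submission
  imports Defs "Jordan_Normal_Form.Determinant"
begin


lemma mat_mult_entry:
  assumes "A \<in> carrier_mat n k" "B \<in> carrier_mat k m" "i < n" "j < m"
  shows "(A * B) $$ (i,j) = (\<Sum>l<k. A $$ (i,l) * B $$ (l,j))"
  using assms by (simp add: scalar_prod_def atLeast0LessThan)

lemma upto10: "{..<(10::nat)} = insert 9 {..<9}" by auto

lemma schur:
  fixes \<Gamma> :: "int mat" and G K X :: "nat \<Rightarrow> nat \<Rightarrow> int" and g dX :: int
  assumes \<Gamma>c: "\<Gamma> \<in> carrier_mat 10 10"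
  and \<Gamma>G: "\<And>i j. i<9 \<Longrightarrow> j<9 \<Longrightarrow> \<Gamma>$$(i,j) = G i j"
  and GK: "\<And>i j. i<9 \<Longrightarrow> j<9 \<Longrightarrow> (\<Sum>l<9. G i l * K l j) = (if i=j then g else 0)"
  and Xu: "\<And>i j. j<i \<Longrightarrow> i<9 \<Longrightarrow> X i j = 0"
  and GXl: "\<And>i j. i<j \<Longrightarrow> j<9 \<Longrightarrow> (\<Sum>l<9. G i l * X l j) = 0"
  and dGX: "(\<Prod>i<9. \<Sum>l<9. G i l * X l i) = g * dX"
  and dX: "(\<Prod>i<9. X i i) = dX" "dX \<noteq> 0" "g \<noteq> 0"
  shows "det \<Gamma> = g * \<Gamma>$$(9,9) - (\<Sum>l<9. \<Sum>m<9. \<Gamma>$$(9,l) * K l m * \<Gamma>$$(m,9))"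
proof -
  define c where "c m = \<Gamma>$$(m,9)" for m
  define y where "y l = (\<Sum>m<9. K l m * c m)" for l
  define S where "S = mat 10 10 (\<lambda>(i,j). if i<9 \<and> j<9 then X i j else if i<9 \<and> j=9 then y i
                       else if i=9 \<and> j=9 then -g else 0)"
  have Sc: "S \<in> carrier_mat 10 10" unfolding S_def by simp
  have "upper_triangular S"
    unfolding upper_triangular_def S_def using Xu by auto
  hence "det S = prod_list (diag_mat S)" using det_upper_triangular Sc by blast
  also have "\<dots> = (\<Prod>i<10. S$$(i,i))" using Sc by (simp add: prod_list_diag_prod atLeast0LessThan)
  also have "\<dots> = (\<Prod>i<9. X i i) * (-g)" unfolding upto10 by (simp add: S_def mult.commute)
  finally have detS: "det S = dX * (-g)" using dX by simp
  have GSc: "\<Gamma> * S \<in> carrier_mat 10 10" using \<Gamma>c Sc by simp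
  have GS: "(\<Gamma>*S)$$(i,j) = (\<Sum>l<10. \<Gamma>$$(i,l) * S$$(l,j))" if "i<10" "j<10" for i j
    using mat_mult_entry[OF \<Gamma>c Sc that] .
  have GS1: "(\<Gamma>*S)$$(i,j) = (\<Sum>l<9. G i l * X l j)" if "i<9" "j<9" for i j
    using that by (simp add: GS upto10) (simp add: S_def \<Gamma>G)
  have GS2: "(\<Gamma>*S)$$(i,9) = 0" if "i<9" for i
  proof -
    have "(\<Gamma>*S)$$(i,9) = (\<Sum>l<9. G i l * y l) + c i * (-g)"
      using that by (simp add: GS upto10) (simp add: S_def \<Gamma>G c_def)
    also have "(\<Sum>l<9. G i l * y l) = (\<Sum>l<9. \<Sum>m<9. G i l * K l m * c m)"
      unfolding y_def by (simp add: sum_distrib_left mult.assoc)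
    also have "\<dots> = (\<Sum>m<9. \<Sum>l<9. G i l * K l m * c m)" by (rule sum.swap)
    also have "\<dots> = (\<Sum>m<9. (\<Sum>l<9. G i l * K l m) * c m)" by (simp add: sum_distrib_right)
    also have "\<dots> = (\<Sum>m<9. if i = m then g * c m else 0)"
      by (rule sum.cong, simp, subst GK, use that in auto)
    also have "\<dots> = g * c i" using that by simp
    finally show ?thesis by simp
  qed
  have GS3: "(\<Gamma>*S)$$(9,9) = (\<Sum>l<9. \<Gamma>$$(9,l) * y l) - g * \<Gamma>$$(9,9)"
    by (simp add: GS upto10) (simp add: S_def)
  have "det (\<Gamma>*S) = prod_list (diag_mat (\<Gamma>*S))"
  proof (rule det_lower_triangular[OF _ GSc])
    fix i j :: nat assume "i < j" "j < 10"
    then show "(\<Gamma>*S)$$(i,j) = 0"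
      using GS1 GS2 GXl by (cases "j = 9") auto
  qed
  also have "\<dots> = (\<Prod>i<10. (\<Gamma>*S)$$(i,i))" using GSc \<Gamma>c by (simp add: prod_list_diag_prod atLeast0LessThan)
  also have "\<dots> = (\<Prod>i<9. (\<Gamma>*S)$$(i,i)) * (\<Gamma>*S)$$(9,9)" unfolding upto10 by (simp add: mult.commute)
  also have "(\<Prod>i<9. (\<Gamma>*S)$$(i,i)) = (\<Prod>i<9. \<Sum>l<9. G i l * X l i)"
    by (rule prod.cong, simp, rule GS1, auto)
  finally have "det \<Gamma> * (dX * (-g)) = g * dX * ((\<Sum>l<9. \<Gamma>$$(9,l) * y l) - g * \<Gamma>$$(9,9))"
    using det_mult[OF \<Gamma>c Sc] detS dGX GS3 by simp
  hence "det \<Gamma> = -((\<Sum>l<9. \<Gamma>$$(9,l) * y l) - g * \<Gamma>$$(9,9))" using dX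
    by (smt (verit) mult.commute mult.left_commute mult_cancel_left mult_minus_right)
  moreover have "(\<Sum>l<9. \<Gamma>$$(9,l) * y l) = (\<Sum>l<9. \<Sum>m<9. \<Gamma>$$(9,l) * K l m * \<Gamma>$$(m,9))"
    unfolding y_def c_def by (simp add: sum_distrib_left mult.assoc)
  ultimately show ?thesis by simp
qed

lemma sq3:
  fixes a b :: int assumes "3 dvd (a^2 - 2*b^2)" shows "3 dvd b"
proof -
  define p q where "p = a mod 3" and "q = b mod 3"
  have a: "a = 3*(a div 3) + p" and b: "b = 3*(b div 3) + q" unfolding p_def q_def by simp_all
  have "a^2 - 2*b^2 = 3*(3*(a div 3)^2 + 2*(a div 3)*p - 6*(b div 3)^2 - 4*(b div 3)*q) + (p^2 - 2*q^2)"
    by (subst a, subst b, simp add: algebra_simps power2_eq_square)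
  with assms have d: "3 dvd (p^2 - 2*q^2)"
    by (metis dvd_add_right_iff dvd_triv_left)
  have "p \<in> {0,1,2}" "q \<in> {0,1,2}" unfolding p_def q_def by auto
  with d have "q = 0" by (auto simp: power2_eq_square)
  thus ?thesis unfolding q_def by auto
qed

definition form :: "(nat \<Rightarrow> nat \<Rightarrow> int) \<Rightarrow> (nat \<Rightarrow> int) \<Rightarrow> (nat \<Rightarrow> int) \<Rightarrow> int" where
  "form B x y = (\<Sum>k<10. \<Sum>l<10. x k * B k l * y l)"

lemma form_sym:
  assumes "\<And>i j. i<10 \<Longrightarrow> j<10 \<Longrightarrow> B i j = B j i"
  shows "form B x y = form B y x"
proof -
  have "form B x y = (\<Sum>l<10. \<Sum>k<10. x k * B k l * y l)" unfolding form_def by (rule sum.swap)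
  also have "\<dots> = form B y x" unfolding form_def
    by (rule sum.cong, simp, rule sum.cong, simp, simp add: assms mult.commute mult.left_commute)
  finally show ?thesis .
qed

lemma form_lin:
  "form B (\<lambda>k. \<Sum>i<n. r i * v i k) y = (\<Sum>i<n. r i * form B (v i) y)"
proof -
  have "form B (\<lambda>k. \<Sum>i<n. r i * v i k) y = (\<Sum>k<10. \<Sum>l<10. \<Sum>i<n. r i * (v i k * B k l * y l))"
    unfolding form_def by (simp add: sum_distrib_right mult.assoc)
  also have "\<dots> = (\<Sum>k<10. \<Sum>i<n. \<Sum>l<10. r i * (v i k * B k l * y l))"
    by (rule sum.cong[OF refl], rule sum.swap)
  also have "\<dots> = (\<Sum>i<n. \<Sum>k<10. \<Sum>l<10. r i * (v i k * B k l * y l))"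
    by (rule sum.swap)
  also have "\<dots> = (\<Sum>i<n. r i * form B (v i) y)"
    unfolding form_def by (simp add: sum_distrib_left)
  finally show ?thesis .
qed

lemma gram_entry:
  assumes "i < 10" "j < 10"
  shows "(mat 10 10 (\<lambda>(i,j). w i j) * mat 10 10 (\<lambda>(i,j). B i j) * transpose_mat (mat 10 10 (\<lambda>(i,j). w i j))) $$ (i,j)
         = form B (w i) (w j)"
proof -
  let ?P = "mat 10 10 (\<lambda>(i,j). w i j)" and ?B = "mat 10 10 (\<lambda>(i,j). B i j)"
  have c1: "?P * ?B \<in> carrier_mat 10 10" by (rule mult_carrier_mat[OF mat_carrier mat_carrier])
  have "(?P * ?B * transpose_mat ?P) $$ (i,j) = (\<Sum>l<10. (?P * ?B) $$ (i,l) * w j l)"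
    using mat_mult_entry[OF c1 _ assms, of "transpose_mat ?P"] assms by simp
  also have "\<dots> = (\<Sum>l<10. (\<Sum>k<10. w i k * B k l) * w j l)"
    by (rule sum.cong, simp, subst mat_mult_entry[of _ 10 10 _ 10], use assms in auto)
  also have "\<dots> = (\<Sum>l<10. \<Sum>k<10. w i k * B k l * w j l)"
    by (simp add: sum_distrib_right)
  also have "\<dots> = form B (w i) (w j)" unfolding form_def by (rule sum.swap)
  finally show ?thesis .
qed


lemma main:
  fixes B G K X :: "nat \<Rightarrow> nat \<Rightarrow> int" and g dX :: int and r :: "nat \<Rightarrow> int"
    and v :: "nat \<Rightarrow> nat \<Rightarrow> int"
  assumes detB: "det (mat 10 10 (\<lambda>(i,j). B i j)) = -1"
  and Bsym: "\<And>i j. i<10 \<Longrightarrow> j<10 \<Longrightarrow> B i j = B j i"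
  and GK: "\<And>i j. i<9 \<Longrightarrow> j<9 \<Longrightarrow> (\<Sum>l<9. G i l * K l j) = (if i=j then g else 0)"
  and Xu: "\<And>i j. j<i \<Longrightarrow> i<9 \<Longrightarrow> X i j = 0"
  and GXl: "\<And>i j. i<j \<Longrightarrow> j<9 \<Longrightarrow> (\<Sum>l<9. G i l * X l j) = 0"
  and dGX: "(\<Prod>i<9. \<Sum>l<9. G i l * X l i) = g * dX"
  and dX: "(\<Prod>i<9. X i i) = dX" "dX \<noteq> 0" "g \<noteq> 0"
  and g3: "3 dvd g"
  and Kr: "\<And>i j. i<9 \<Longrightarrow> j<9 \<Longrightarrow> 3 dvd (K i j - 2 * r i * r j)"
  and rG: "\<not> 9 dvd (\<Sum>i<9. \<Sum>j<9. r i * G i j * r j)"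
  and vG: "\<And>i j. i<9 \<Longrightarrow> j<9 \<Longrightarrow> form B (v i) (v j) = G i j"
  shows False
proof -
  have fsym: "form B x y = form B y x" for x y by (rule form_sym, rule Bsym)
  have key: "3 dvd (\<Sum>i<9. r i * form B (v i) u)" for u
  proof -
    define w where "w i = (if i < 9 then v i else u)" for i
    define P where "P = mat 10 10 (\<lambda>(i,j). w i j)"
    define Bm where "Bm = mat 10 10 (\<lambda>(i,j). B i j)"
    define \<Gamma> where "\<Gamma> = P * Bm * transpose_mat P"
    have Pc: "P \<in> carrier_mat 10 10" "Bm \<in> carrier_mat 10 10" unfolding P_def Bm_def by (rule mat_carrier)+
    have PBc: "P * Bm \<in> carrier_mat 10 10" using Pc by simp
    have Tc: "transpose_mat P \<in> carrier_mat 10 10" using Pc by simp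
    have \<Gamma>c: "\<Gamma> \<in> carrier_mat 10 10" unfolding \<Gamma>_def using PBc Tc by simp
    have \<Gamma>e: "\<Gamma>$$(i,j) = form B (w i) (w j)" if "i<10" "j<10" for i j
      unfolding \<Gamma>_def P_def Bm_def using gram_entry[OF that] .
    have "det \<Gamma> = det (P * Bm) * det (transpose_mat P)"
      unfolding \<Gamma>_def by (rule det_mult[OF PBc Tc])
    also have "\<dots> = det P * det Bm * det P"
      using det_mult[OF Pc] det_transpose[OF Pc(1)] by simp
    finally have d1: "det \<Gamma> = - (det P * det P)" using detB unfolding Bm_def by simp
    define c where "c l = form B (v l) u" for l
    define Q where "Q = (\<Sum>l<9. \<Sum>m<9. c l * K l m * c m)"
    have "det \<Gamma> = g * \<Gamma>$$(9,9) - (\<Sum>l<9. \<Sum>m<9. \<Gamma>$$(9,l) * K l m * \<Gamma>$$(m,9))"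
      by (rule schur[OF \<Gamma>c _ GK Xu GXl dGX dX], auto simp: \<Gamma>e w_def vG)
    also have "(\<Sum>l<9. \<Sum>m<9. \<Gamma>$$(9,l) * K l m * \<Gamma>$$(m,9)) = Q"
      unfolding Q_def by (intro sum.cong refl, auto simp: \<Gamma>e w_def c_def fsym[of u])
    also have "\<Gamma>$$(9,9) = form B u u" by (simp add: \<Gamma>e w_def)
    finally have d2: "det P * det P = Q - g * form B u u" using d1 by simp
    define s where "s = (\<Sum>i<9. r i * c i)"
    have "s^2 = (\<Sum>l<9. \<Sum>m<9. (r l * c l) * (r m * c m))"
      unfolding s_def power2_eq_square by (rule sum_product)
    hence "Q - 2*s^2 = (\<Sum>l<9. \<Sum>m<9. c l * (K l m - 2 * r l * r m) * c m)"
      unfolding Q_def by (simp add: sum_distrib_left sum_subtractf[symmetric] algebra_simps)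
    also have "3 dvd \<dots>"
      by (intro dvd_sum, rule dvd_mult2, rule dvd_mult, rule Kr, auto)
    finally have "3 dvd (Q - 2*s^2)" .
    moreover have "3 dvd (g * form B u u)" using g3 by simp
    moreover define dP where "dP = det P"
    moreover have "dP^2 = Q - g * form B u u" using d2 by (simp add: dP_def power2_eq_square)
    ultimately have A3: "3 dvd ((Q - 2*s^2) - g * form B u u)" and E3: "dP^2 - 2*s^2 = (Q - 2*s^2) - g * form B u u"
      by (simp_all add: dvd_diff)
    have "3 dvd (dP^2 - 2*s^2)" unfolding E3 by (rule A3)
    hence "3 dvd s" by (rule sq3)
    thus ?thesis unfolding s_def c_def .
  qed
  define x where "x k = (\<Sum>i<9. r i * v i k)" for k
  have xl: "form B x y = (\<Sum>i<9. r i * form B (v i) y)" for y unfolding x_def by (rule form_lin)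
  have h1: "\<And>(a::int) P. a * (if P then 1 else 0) = (if P then a else 0)" by simp
  have h2: "\<And>(a::int) c P. (if P then a else 0) * c = (if P then a * c else 0)" by simp
  have y3: "3 dvd (\<Sum>l<10. B k l * x l)" if "k<10" for k
  proof -
    have "form B x (\<lambda>l. if l = k then 1 else 0) = (\<Sum>k'<10. x k' * B k' k)"
      unfolding form_def using that by (simp add: h1)
    also have "\<dots> = (\<Sum>l<10. B k l * x l)" using that by (intro sum.cong refl, simp add: Bsym)
    finally show ?thesis using key[of "\<lambda>l. if l = k then 1 else 0"] xl by simp
  qed
  define Bm where "Bm = mat 10 10 (\<lambda>(i,j). B i j)"
  define A where "A = adj_mat Bm"
  have Bmc: "Bm \<in> carrier_mat 10 10" unfolding Bm_def by (rule mat_carrier)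
  have Ac: "A \<in> carrier_mat 10 10" unfolding A_def using adj_mat(1)[OF Bmc] .
  have AB: "A * Bm = (-1) \<cdot>\<^sub>m 1\<^sub>m 10" unfolding A_def using adj_mat(3)[OF Bmc] detB Bm_def by simp
  have x3: "3 dvd x k" if "k<10" for k
  proof -
    have e: "(A * Bm) $$ (k,k') = (\<Sum>l<10. A $$ (k,l) * B l k')" if "k'<10" for k'
    proof -
      have "(A*Bm)$$(k,k') = (\<Sum>l<10. A$$(k,l) * Bm$$(l,k'))" by (rule mat_mult_entry[OF Ac Bmc \<open>k<10\<close> that])
      also have "\<dots> = (\<Sum>l<10. A$$(k,l) * B l k')" using that by (intro sum.cong refl) (simp add: Bm_def)
      finally show ?thesis .
    qed
    have "(\<Sum>k'<10. (A * Bm) $$ (k,k') * x k') = (\<Sum>k'<10. if k = k' then - x k' else 0)"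
      using \<open>k<10\<close> by (intro sum.cong refl) (simp add: AB)
    also have "\<dots> = - x k" using \<open>k<10\<close> by simp
    finally have "x k = - (\<Sum>k'<10. (A * Bm) $$ (k,k') * x k')" by simp
    also have "\<dots> = - (\<Sum>k'<10. \<Sum>l<10. A $$ (k,l) * B l k' * x k')"
      by (simp add: e sum_distrib_right)
    also have "(\<Sum>k'<10. \<Sum>l<10. A $$ (k,l) * B l k' * x k') = (\<Sum>l<10. \<Sum>k'<10. A $$ (k,l) * B l k' * x k')"
      by (rule sum.swap)
    also have "\<dots> = (\<Sum>l<10. A $$ (k,l) * (\<Sum>k'<10. B l k' * x k'))"
      by (simp add: sum_distrib_left mult.assoc)
    finally have "x k = - (\<Sum>l<10. A $$ (k,l) * (\<Sum>k'<10. B l k' * x k'))" .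
    moreover have "3 dvd (\<Sum>l<10. A $$ (k,l) * (\<Sum>k'<10. B l k' * x k'))"
      by (intro dvd_sum dvd_mult y3, simp)
    ultimately show ?thesis by simp
  qed
  have "9 dvd form B x x"
    unfolding form_def
  proof (intro dvd_sum)
    fix k l assume "k \<in> {..<10::nat}" "l \<in> {..<10::nat}"
    hence "3 * 3 dvd x k * x l" using x3 by (intro mult_dvd_mono) auto
    hence "9 dvd x k * x l * B k l" by simp
    thus "9 dvd x k * B k l * x l" by (simp add: mult_ac)
  qed
  moreover have "form B x x = (\<Sum>i<9. \<Sum>j<9. r i * G i j * r j)"
  proof -
    have "form B x x = (\<Sum>i<9. r i * (\<Sum>j<9. r j * G j i))"
      unfolding xl by (intro sum.cong refl, simp add: fsym[of _ x] xl vG)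
    also have "\<dots> = (\<Sum>i<9. \<Sum>j<9. r i * r j * G j i)" by (simp add: sum_distrib_left mult.assoc)
    also have "\<dots> = (\<Sum>j<9. \<Sum>i<9. r i * r j * G j i)" by (rule sum.swap)
    also have "\<dots> = (\<Sum>i<9. \<Sum>j<9. r i * G i j * r j)" by (simp add: mult_ac)
    finally show ?thesis .
  qed
  ultimately show False using rG by simp
qed

definition G1l :: "int list list" where "G1l = [[-2,0,0,0,0,0,0,0,0],[0,-2,0,0,0,0,0,0,0],[0,0,-2,0,0,0,0,0,0],[0,0,0,-2,1,0,0,0,0],[0,0,0,1,-2,0,0,0,0],[0,0,0,0,0,-2,1,0,0],[0,0,0,0,0,1,-2,1,0],[0,0,0,0,0,0,1,-2,1],[0,0,0,0,0,0,0,1,-2]]"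
definition K1l :: "int list list" where "K1l = [[60,0,0,0,0,0,0,0,0],[0,60,0,0,0,0,0,0,0],[0,0,60,0,0,0,0,0,0],[0,0,0,80,40,0,0,0,0],[0,0,0,40,80,0,0,0,0],[0,0,0,0,0,96,72,48,24],[0,0,0,0,0,72,144,96,48],[0,0,0,0,0,48,96,144,72],[0,0,0,0,0,24,48,72,96]]"
definition X1l :: "int list list" where "X1l = [[-1,0,0,0,0,0,0,0,0],[0,-1,0,0,0,0,0,0,0],[0,0,-1,0,0,0,0,0,0],[0,0,0,-1,-1,0,0,0,0],[0,0,0,0,-2,0,0,0,0],[0,0,0,0,0,-1,-1,-1,-1],[0,0,0,0,0,0,-2,-2,-2],[0,0,0,0,0,0,0,-3,-3],[0,0,0,0,0,0,0,0,-4]]"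
definition r1l :: "int list" where "r1l = [0,0,0,1,2,0,0,0,0]"
definition G2l :: "int list list" where "G2l = [[-2,0,0,0,0,0,0,0,0],[0,-2,0,0,0,0,0,0,0],[0,0,-2,0,0,0,0,0,0],[0,0,0,-2,0,0,0,0,0],[0,0,0,0,-2,1,0,0,0],[0,0,0,0,1,-2,1,0,0],[0,0,0,0,0,1,-2,1,0],[0,0,0,0,0,0,1,-2,1],[0,0,0,0,0,0,0,1,-2]]"
definition K2l :: "int list list" where "K2l = [[48,0,0,0,0,0,0,0,0],[0,48,0,0,0,0,0,0,0],[0,0,48,0,0,0,0,0,0],[0,0,0,48,0,0,0,0,0],[0,0,0,0,80,64,48,32,16],[0,0,0,0,64,128,96,64,32],[0,0,0,0,48,96,144,96,48],[0,0,0,0,32,64,96,128,64],[0,0,0,0,16,32,48,64,80]]"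
definition X2l :: "int list list" where "X2l = [[-1,0,0,0,0,0,0,0,0],[0,-1,0,0,0,0,0,0,0],[0,0,-1,0,0,0,0,0,0],[0,0,0,-1,0,0,0,0,0],[0,0,0,0,-1,-1,-1,-1,-1],[0,0,0,0,0,-2,-2,-2,-2],[0,0,0,0,0,0,-3,-3,-3],[0,0,0,0,0,0,0,-4,-4],[0,0,0,0,0,0,0,0,-5]]"
definition r2l :: "int list" where "r2l = [0,0,0,0,1,2,3,4,5]"
definition Bl :: "int list list" where "Bl = [[0,1,0,0,0,0,0,0,0,0],[1,0,0,0,0,0,0,0,0,0],[0,0,-2,0,1,0,0,0,0,0],[0,0,0,-2,0,1,0,0,0,0],[0,0,1,0,-2,1,0,0,0,0],[0,0,0,1,1,-2,1,0,0,0],[0,0,0,0,0,1,-2,1,0,0],[0,0,0,0,0,0,1,-2,1,0],[0,0,0,0,0,0,0,1,-2,1],[0,0,0,0,0,0,0,0,1,-2]]"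
definition Y1l :: "int list list" where "Y1l = [[1,0,0,0,0,0,0,0,0,0],[1,1,0,0,0,0,0,0,0,0],[0,0,1,0,0,0,0,0,0,0],[0,0,0,1,0,0,0,0,0,0],[0,0,0,0,1,0,0,0,0,0],[0,0,0,0,0,1,0,0,0,0],[0,0,0,0,0,0,1,0,0,0],[0,0,0,0,0,0,0,1,0,0],[0,0,0,0,0,0,0,0,1,0],[0,0,0,0,0,0,0,0,0,1]]"
definition Y2l :: "int list list" where "Y2l = [[1,1,0,0,0,0,0,0,0,0],[0,-1,0,0,0,0,0,0,0,0],[0,0,-1,0,-1,-2,-2,-2,-2,-2],[0,0,0,-1,0,-3,-3,-3,-3,-3],[0,0,0,0,-2,-4,-4,-4,-4,-4],[0,0,0,0,0,-6,-6,-6,-6,-6],[0,0,0,0,0,0,-5,-5,-5,-5],[0,0,0,0,0,0,0,-4,-4,-4],[0,0,0,0,0,0,0,0,-3,-3],[0,0,0,0,0,0,0,0,0,-2]]"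
definition BY1l :: "int list list" where "BY1l = [[1,1,0,0,0,0,0,0,0,0],[1,0,0,0,0,0,0,0,0,0],[0,0,-2,0,1,0,0,0,0,0],[0,0,0,-2,0,1,0,0,0,0],[0,0,1,0,-2,1,0,0,0,0],[0,0,0,1,1,-2,1,0,0,0],[0,0,0,0,0,1,-2,1,0,0],[0,0,0,0,0,0,1,-2,1,0],[0,0,0,0,0,0,0,1,-2,1],[0,0,0,0,0,0,0,0,1,-2]]"

definition "G1 i j = G1l ! i ! j"
definition "K1 i j = K1l ! i ! j"
definition "X1 i j = X1l ! i ! j"
definition "r1 i = r1l ! i"
definition "G2 i j = G2l ! i ! j"
definition "K2 i j = K2l ! i ! j"
definition "X2 i j = X2l ! i ! j"
definition "r2 i = r2l ! i"

lemma R1_facts: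
  "\<forall>i<9. \<forall>j<9. lat_gram R1 i j = G1 i j"
  "\<forall>i<9. \<forall>j<9. (\<Sum>l<9. G1 i l * K1 l j) = (if i=j then -120 else 0)"
  "\<forall>i<9. \<forall>j<i. X1 i j = 0"
  "\<forall>j<9. \<forall>i<j. (\<Sum>l<9. G1 i l * X1 l j) = 0"
  "(\<Prod>i<9. \<Sum>l<9. G1 i l * X1 l i) = -120 * -48"
  "(\<Prod>i<9. X1 i i) = -48"
  "\<forall>i<9. \<forall>j<9. (3::int) dvd (K1 i j - 2 * r1 i * r1 j)"
  "\<not> (9::int) dvd (\<Sum>i<9. \<Sum>j<9. r1 i * G1 i j * r1 j)"
  "lat_rank R1 = 9"
  by (simp_all add: R1_def lat_sums_def lat_sum_def lat_rank_def lat_gram_def A_lat_def zero_lat_def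
     G1_def K1_def X1_def r1_def G1l_def K1l_def X1l_def r1l_def numeral_eq_Suc All_less_Suc)

lemma R2_facts:
  "\<forall>i<9. \<forall>j<9. lat_gram R2 i j = G2 i j"
  "\<forall>i<9. \<forall>j<9. (\<Sum>l<9. G2 i l * K2 l j) = (if i=j then -96 else 0)"
  "\<forall>i<9. \<forall>j<i. X2 i j = 0"
  "\<forall>j<9. \<forall>i<j. (\<Sum>l<9. G2 i l * X2 l j) = 0"
  "(\<Prod>i<9. \<Sum>l<9. G2 i l * X2 l i) = -96 * -120"
  "(\<Prod>i<9. X2 i i) = -120"
  "\<forall>i<9. \<forall>j<9. (3::int) dvd (K2 i j - 2 * r2 i * r2 j)"
  "\<not> (9::int) dvd (\<Sum>i<9. \<Sum>j<9. r2 i * G2 i j * r2 j)"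
  "lat_rank R2 = 9"
  by (simp_all add: R2_def lat_sums_def lat_sum_def lat_rank_def lat_gram_def A_lat_def zero_lat_def
     G2_def K2_def X2_def r2_def G2l_def K2l_def X2l_def r2l_def numeral_eq_Suc All_less_Suc)


definition "B2 i j = Bl ! i ! j"
definition "Y1 i j = Y1l ! i ! j"
definition "Y2 i j = Y2l ! i ! j"
definition "BY1 i j = BY1l ! i ! j"
definition "B1 (i::nat) (j::nat) = (if i = j then (if i = 0 then 1 else -1) else (0::int))"

lemma mat_prod_fun:
  "mat n n (\<lambda>(i,j). f i j) * mat n n (\<lambda>(i,j). g i j) = mat n n (\<lambda>(i,j). \<Sum>k<n. f i k * (g k j :: 'a :: comm_ring_1))"
  by (rule eq_matI, subst mat_mult_entry[of _ n n _ n], auto intro!: sum.cong)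

lemma det_lowfun:
  assumes "\<forall>j<n. \<forall>i<j. f i j = (0::'a::comm_ring_1)"
  shows "det (mat n n (\<lambda>(i,j). f i j)) = (\<Prod>i<n. f i i)"
proof -
  have "det (mat n n (\<lambda>(i,j). f i j)) = prod_list (diag_mat (mat n n (\<lambda>(i,j). f i j)))"
    by (rule det_lower_triangular[of n], use assms in auto)
  also have "\<dots> = (\<Prod>i<n. f i i)" by (simp add: prod_list_diag_prod atLeast0LessThan)
  finally show ?thesis .
qed

lemma det_upfun:
  assumes "\<forall>i<n. \<forall>j<i. f i j = (0::'a::comm_ring_1)"
  shows "det (mat n n (\<lambda>(i,j). f i j)) = (\<Prod>i<n. f i i)"
proof -
  have "det (mat n n (\<lambda>(i,j). f i j)) = prod_list (diag_mat (mat n n (\<lambda>(i,j). f i j)))"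
    by (rule det_upper_triangular[of _ n], use assms in \<open>auto simp: upper_triangular_def\<close>)
  also have "\<dots> = (\<Prod>i<n. f i i)" by (simp add: prod_list_diag_prod atLeast0LessThan)
  finally show ?thesis .
qed

lemma mat_cong10: "(\<forall>i<n. \<forall>j<n. f i j = g i j) \<Longrightarrow> mat n n (\<lambda>(i,j). f i j) = mat n n (\<lambda>(i,j). g i j)"
  by (rule eq_matI) auto

lemma II_facts:
  "\<forall>i<10. \<forall>j<10. lat_gram II_1_9 i j = B2 i j"
  "lat_rank II_1_9 = 10"
  "\<forall>i<10. \<forall>j<10. B2 i j = B2 j i"
  "\<forall>i<10. \<forall>j<10. (\<Sum>k<10. B2 i k * Y1 k j) = BY1 i j"
  "\<forall>j<10. \<forall>i<j. (\<Sum>k<10. BY1 i k * Y2 k j) = 0"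
  "(\<Prod>i<10. \<Sum>k<10. BY1 i k * Y2 k i) = 1440"
  "\<forall>j<10. \<forall>i<j. Y1 i j = 0"
  "(\<Prod>i<10. Y1 i i) = 1"
  "\<forall>i<10. \<forall>j<i. Y2 i j = 0"
  "(\<Prod>i<10. Y2 i i) = -1440"
  by (simp_all add: II_1_9_def lat_sum_def lat_rank_def lat_gram_def H_lat_def E8_lat_def E8_edge_def
     B2_def Y1_def Y2_def BY1_def Bl_def Y1l_def Y2l_def BY1l_def numeral_eq_Suc All_less_Suc)

lemma Dm_facts:
  "lat_rank (lat_sums (replicate n (rank1_lat (-1)))) = n \<and>
   (\<forall>i j. lat_gram (lat_sums (replicate n (rank1_lat (-1)))) i j = (if i = j \<and> i < n then -1 else 0))"
proof (induction n)
  case 0 then show ?case by (simp add: lat_sums_def zero_lat_def lat_rank_def lat_gram_def)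
next
  case (Suc n)
  have e: "lat_sums (replicate (Suc n) (rank1_lat (-1))) = lat_sum (rank1_lat (-1)) (lat_sums (replicate n (rank1_lat (-1))))"
    by (simp add: lat_sums_def)
  show ?case unfolding e using Suc
    by (auto simp: lat_sum_def lat_rank_def lat_gram_def rank1_lat_def)
qed

lemma I_facts:
  "\<forall>i<10. \<forall>j<10. lat_gram I_1_9 i j = B1 i j"
  "lat_rank I_1_9 = 10"
proof -
  have e: "I_1_9 = lat_sum (rank1_lat 1) (lat_sums (replicate 9 (rank1_lat (-1))))"
    by (simp add: I_1_9_def lat_sums_def)
  show "lat_rank I_1_9 = 10" unfolding e using Dm_facts[of 9]
    by (simp add: lat_sum_def lat_rank_def rank1_lat_def)
  show "\<forall>i<10. \<forall>j<10. lat_gram I_1_9 i j = B1 i j" unfolding e using Dm_facts[of 9]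
    by (auto simp: lat_sum_def lat_rank_def lat_gram_def rank1_lat_def B1_def)
qed

lemma det_II: "det (mat 10 10 (\<lambda>(i,j). lat_gram II_1_9 i j)) = -1"
proof -
  let ?B = "mat 10 10 (\<lambda>(i,j). B2 i j)" and ?Y1 = "mat 10 10 (\<lambda>(i,j). Y1 i j)"
    and ?Y2 = "mat 10 10 (\<lambda>(i,j). Y2 i j)"
  have e: "mat 10 10 (\<lambda>(i,j). lat_gram II_1_9 i j) = ?B"
    by (rule mat_cong10) (use II_facts(1) in auto)
  have "?B * ?Y1 = mat 10 10 (\<lambda>(i,j). BY1 i j)"
    unfolding mat_prod_fun by (rule mat_cong10) (use II_facts(4) in auto)
  hence p: "?B * ?Y1 * ?Y2 = mat 10 10 (\<lambda>(i,j). \<Sum>k<10. BY1 i k * Y2 k j)"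
    by (simp add: mat_prod_fun)
  have "det (?B * ?Y1 * ?Y2) = 1440"
    unfolding p by (subst det_lowfun) (use II_facts(5,6) in auto)
  moreover have "det (?B * ?Y1 * ?Y2) = det ?B * det ?Y1 * det ?Y2"
    by (subst det_mult[of _ 10], rule mult_carrier_mat[OF mat_carrier mat_carrier], rule mat_carrier,
        subst det_mult[of _ 10], auto)
  moreover have "det ?Y1 = 1" by (subst det_lowfun) (use II_facts(7,8) in auto)
  moreover have "det ?Y2 = -1440" by (subst det_upfun) (use II_facts(9,10) in auto)
  ultimately show ?thesis unfolding e by simp
qed

lemma det_I: "det (mat 10 10 (\<lambda>(i,j). lat_gram I_1_9 i j)) = -1"
proof -
  have e: "mat 10 10 (\<lambda>(i,j). lat_gram I_1_9 i j) = mat 10 10 (\<lambda>(i,j). B1 i j)"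
    by (rule mat_cong10) (use I_facts(1) in auto)
  show ?thesis unfolding e
  proof (subst det_upfun)
    show "\<forall>i<10. \<forall>j<i. B1 i j = 0" by (auto simp: B1_def)
    show "(\<Prod>i<10. B1 i i) = -1" by (simp add: B1_def lessThan_nat_numeral)
  qed
qed

lemma no_emb:
  fixes R M :: lat and G K X :: "nat \<Rightarrow> nat \<Rightarrow> int" and g dX :: int and r :: "nat \<Rightarrow> int"
  assumes rkR: "lat_rank R = 9" and rkM: "lat_rank M = 10"
  and gR: "\<forall>i<9. \<forall>j<9. lat_gram R i j = G i j"
  and detB: "det (mat 10 10 (\<lambda>(i,j). lat_gram M i j)) = -1"
  and Bsym: "\<forall>i<10. \<forall>j<10. lat_gram M i j = lat_gram M j i"
  and GK: "\<forall>i<9. \<forall>j<9. (\<Sum>l<9. G i l * K l j) = (if i=j then g else 0)"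
  and Xu: "\<forall>i<9. \<forall>j<i. X i j = 0"
  and GXl: "\<forall>j<9. \<forall>i<j. (\<Sum>l<9. G i l * X l j) = 0"
  and dGX: "(\<Prod>i<9. \<Sum>l<9. G i l * X l i) = g * dX"
  and dX: "(\<Prod>i<9. X i i) = dX" "dX \<noteq> 0" "g \<noteq> 0" and g3: "3 dvd g"
  and Kr: "\<forall>i<9. \<forall>j<9. (3::int) dvd (K i j - 2 * r i * r j)"
  and rG: "\<not> (9::int) dvd (\<Sum>i<9. \<Sum>j<9. r i * G i j * r j)"
  shows "\<not> lat_embeds R M"
proof
  assume "lat_embeds R M"
  then obtain v where v: "\<forall>i<9. \<forall>j<9. lat_form M (v i) (v j) = lat_gram R i j"
    unfolding lat_embeds_def rkR by blast
  have lf: "lat_form M x y = form (lat_gram M) x y" for x y unfolding lat_form_def form_def rkM ..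
  show False
  proof (rule main[where B="lat_gram M" and G=G and K=K and X=X and g=g and dX=dX and r=r and v=v])
    show "det (mat 10 10 (\<lambda>(i,j). lat_gram M i j)) = -1" by (rule detB)
    show "\<And>i j. i<10 \<Longrightarrow> j<10 \<Longrightarrow> lat_gram M i j = lat_gram M j i" using Bsym by blast
    show "\<And>i j. i<9 \<Longrightarrow> j<9 \<Longrightarrow> (\<Sum>l<9. G i l * K l j) = (if i=j then g else 0)" using GK by blast
    show "\<And>i j. j<i \<Longrightarrow> i<9 \<Longrightarrow> X i j = 0" using Xu by auto
    show "\<And>i j. i<j \<Longrightarrow> j<9 \<Longrightarrow> (\<Sum>l<9. G i l * X l j) = 0" using GXl by auto
    show "(\<Prod>i<9. \<Sum>l<9. G i l * X l i) = g * dX" by (rule dGX)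
    show "(\<Prod>i<9. X i i) = dX" "dX \<noteq> 0" "g \<noteq> 0" "3 dvd g" by (fact dX(1), fact dX(2), fact dX(3), fact g3)
    show "\<And>i j. i<9 \<Longrightarrow> j<9 \<Longrightarrow> 3 dvd (K i j - 2 * r i * r j)" using Kr by blast
    show "\<not> 9 dvd (\<Sum>i<9. \<Sum>j<9. r i * G i j * r j)" by (rule rG)
    show "\<And>i j. i<9 \<Longrightarrow> j<9 \<Longrightarrow> form (lat_gram M) (v i) (v j) = G i j"
      using v gR by (simp add: lf[symmetric])
  qed
qed

lemma symI: "\<forall>i<10. \<forall>j<10. lat_gram I_1_9 i j = lat_gram I_1_9 j i"
  using I_facts(1) by (auto simp: B1_def)

lemma symII: "\<forall>i<10. \<forall>j<10. lat_gram II_1_9 i j = lat_gram II_1_9 j i"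
  using II_facts(1,3) by auto

lemma R1_I: "\<not> lat_embeds R1 I_1_9"
  by (rule no_emb[OF R1_facts(9) I_facts(2) R1_facts(1) det_I symI R1_facts(2,3,4,5,6) _ _ _ R1_facts(7,8)]) simp_all

lemma R1_II: "\<not> lat_embeds R1 II_1_9"
  by (rule no_emb[OF R1_facts(9) II_facts(2) R1_facts(1) det_II symII R1_facts(2,3,4,5,6) _ _ _ R1_facts(7,8)]) simp_all

lemma R2_I: "\<not> lat_embeds R2 I_1_9"
  by (rule no_emb[OF R2_facts(9) I_facts(2) R2_facts(1) det_I symI R2_facts(2,3,4,5,6) _ _ _ R2_facts(7,8)]) simp_all

lemma R2_II: "\<not> lat_embeds R2 II_1_9"
  by (rule no_emb[OF R2_facts(9) II_facts(2) R2_facts(1) det_II symII R2_facts(2,3,4,5,6) _ _ _ R2_facts(7,8)]) simp_all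

theorem lemma6p8:
  shows "\<forall>R \<in> {R1, R2}. \<not> lat_embeds R I_1_9 \<and> \<not> lat_embeds R II_1_9"
  using R1_I R1_II R2_I R2_II by auto

end
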